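(* Let $n\ge 1$ and let $[v_0,\dots,v_n]$ and $[v'_0,\dots,v'_n]$ be (non-degenerate) $n$-simplices in $\mathbb{R}^n$. The following are equivalent: (i) there are real numbers $u_0,\dots,u_n$ such that $|v'_i-v'_j| = e^{\frac12(u_i+u_j)}|v_i-v_j|$ for all two-element subsets $\{i,j\}\subseteq\{0,\dots,n\}$; (ii) there is a Möbius transformation $T$ of $\widehat{\mathbb{R}^n}$ such that $v'_i=T(v_i)$ for all $i\in\{0,\dots,n\}$.
   Context: $\widehat{\mathbb{R}^n}=\mathbb{R}^n\cup\{\infty\}$ is the one-point compactification of $\mathbb{R}^n$. A Möbius transformation of $\widehat{\mathbb{R}^n}$ is a composition of inversions in (Euclidean) hyperspheres and reflections in hyperplanes. $|\cdot|$ denotes the Euclidean norm. *)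

theory Defs
  imports "HOL-Analysis.Analysis"
begin

text \<open>The one-point compactification of the Euclidean space 'a is modelled as
  'a option: Some x is the point x, None is the point at infinity.\<close>

definition sphere_inversion :: "'a::euclidean_space \<Rightarrow> real \<Rightarrow> 'a option \<Rightarrow> 'a option" where
  "sphere_inversion a r p = (case p of
      None \<Rightarrow> Some a
    | Some x \<Rightarrow> (if x = a then None
                 else Some (a + (r^2 / (norm (x - a))^2) *\<^sub>R (x - a))))"

definition hyperplane_reflection :: "'a::euclidean_space \<Rightarrow> real \<Rightarrow> 'a option \<Rightarrow> 'a option" where
  "hyperplane_reflection u c p = (case p of
      None \<Rightarrow> None
    | Some x \<Rightarrow> Some (x - (2 * (inner x u - c) / inner u u) *\<^sub>R u))"

inductive mobius :: "('a::euclidean_space option \<Rightarrow> 'a option) \<Rightarrow> bool" where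
  inv: "r > 0 \<Longrightarrow> mobius (sphere_inversion a r)"
| refl: "u \<noteq> 0 \<Longrightarrow> mobius (hyperplane_reflection u c)"
| comp: "mobius f \<Longrightarrow> mobius g \<Longrightarrow> mobius (f \<circ> g)"

end

theory Submission
  imports Defs
begin

lemma inv_alg:
  fixes A B s R :: real
  assumes "A > 0" "B > 0"
  shows "(R / A)^2 * A - 2 * (R / A) * (R / B) * s + (R / B)^2 * B = R^2 * (B - 2 * s + A) / (A * B)"
  using assms by (simp add: field_simps power2_eq_square)

lemma inv_dist:
  fixes x y a :: "'a::euclidean_space"
  assumes "x \<noteq> a" "y \<noteq> a"
  shows "dist (a + (r^2 / (norm (x - a))^2) *\<^sub>R (x - a)) (a + (r^2 / (norm (y - a))^2) *\<^sub>R (y - a))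
        = r^2 * dist x y / (dist x a * dist y a)"
proof -
  define X where "X = x - a"
  define Y where "Y = y - a"
  have X: "X \<noteq> 0" and Y: "Y \<noteq> 0" using assms by (auto simp: X_def Y_def)
  have nX: "norm X > 0" and nY: "norm Y > 0" using X Y by auto
  have e: "x - y = X - Y" by (simp add: X_def Y_def)
  define cx where "cx = r^2 / (norm X)^2"
  define cy where "cy = r^2 / (norm Y)^2"
  have e1: "(norm (cx *\<^sub>R X - cy *\<^sub>R Y))^2 = cx^2 * inner X X - 2 * cx * cy * inner X Y + cy^2 * inner Y Y"
    by (simp only: power2_norm_eq_inner) (simp add: inner_diff_left inner_diff_right inner_commute power2_eq_square algebra_simps)
  have e2: "(norm (X - Y))^2 = inner Y Y - 2 * inner X Y + inner X X"
    by (simp only: power2_norm_eq_inner) (simp add: inner_diff_left inner_diff_right inner_commute algebra_simps)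
  have A: "inner X X = (norm X)^2" "inner Y Y = (norm Y)^2" by (simp_all add: power2_norm_eq_inner)
  have "(norm (cx *\<^sub>R X - cy *\<^sub>R Y))^2 = (r^2)^2 * (norm (X - Y))^2 / ((norm X)^2 * (norm Y)^2)"
    unfolding e1 e2 unfolding cx_def cy_def A using nX nY by (intro inv_alg) auto
  also have "\<dots> = (r^2 * norm (X - Y) / (norm X * norm Y))^2" by (simp add: power_divide power_mult_distrib)
  finally have "norm (cx *\<^sub>R X - cy *\<^sub>R Y) = r^2 * norm (X - Y) / (norm X * norm Y)"
    using nX nY by (subst (asm) power2_eq_iff_nonneg) auto
  then show ?thesis by (simp add: dist_norm X_def Y_def cx_def cy_def)
qed

lemma inv_dist_center:
  fixes y a :: "'a::euclidean_space"
  assumes "y \<noteq> a"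
  shows "dist (a + (r^2 / (norm (y - a))^2) *\<^sub>R (y - a)) a = r^2 / dist y a"
  using assms by (simp add: dist_norm power2_eq_square)

lemma inv_dist_center':
  fixes y a :: "'a::euclidean_space"
  assumes "y \<noteq> a"
  shows "dist a (a + (r^2 / (norm (y - a))^2) *\<^sub>R (y - a)) = r^2 / dist y a"
  using inv_dist_center[OF assms, of r] by (simp add: dist_commute)

lemma inv_dist_center_sq:
  fixes y a :: "'a::euclidean_space"
  assumes "y \<noteq> a"
  shows "dist (a + (r*r / (norm (y - a) * norm (y - a))) *\<^sub>R (y - a)) a = r*r / dist y a"
    "dist a (a + (r*r / (norm (y - a) * norm (y - a))) *\<^sub>R (y - a)) = r*r / dist y a"
  using inv_dist_center[OF assms, of r] inv_dist_center'[OF assms, of r] by (simp_all add: power2_eq_square)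

lemma inv_dist_sq:
  fixes x y a :: "'a::euclidean_space"
  assumes "x \<noteq> a" "y \<noteq> a"
  shows "dist (a + (r*r / (norm (x - a) * norm (x - a))) *\<^sub>R (x - a)) (a + (r*r / (norm (y - a) * norm (y - a))) *\<^sub>R (y - a))
        = r*r * dist x y / (dist x a * dist y a)"
    "dist ((r*r / (norm (x - a) * norm (x - a))) *\<^sub>R (x - a)) ((r*r / (norm (y - a) * norm (y - a))) *\<^sub>R (y - a))
        = r*r * dist x y / (dist x a * dist y a)"
  using inv_dist[OF assms, of r] by (simp_all add: power2_eq_square)

definition rf :: "'a::euclidean_space \<Rightarrow> real \<Rightarrow> 'a \<Rightarrow> 'a" where
  "rf u c x = x - (2 * (inner x u - c) / inner u u) *\<^sub>R u"

lemma rf_dist: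
  fixes u :: "'a::euclidean_space"
  assumes "u \<noteq> 0"
  shows "dist (rf u c x) (rf u c y) = dist x y"
proof -
  have e: "rf u c x - rf u c y = (x - y) - (2 * inner (x - y) u / inner u u) *\<^sub>R u"
    by (simp add: rf_def inner_diff_left algebra_simps diff_divide_distrib)
  have uu: "inner u u > 0" using assms by simp
  define d where "d = x - y"
  define k where "k = 2 * inner d u / inner u u"
  have "(norm (rf u c x - rf u c y))^2 = inner d d - 2 * k * inner d u + k^2 * inner u u"
    unfolding e d_def[symmetric] k_def[symmetric]
    by (simp only: power2_norm_eq_inner) (simp add: inner_diff_left inner_diff_right inner_commute power2_eq_square algebra_simps)
  also have "\<dots> = inner d d"
  proof -
    have "k * inner u u = 2 * inner d u" unfolding k_def using uu by simp
    then have "k^2 * inner u u = 2 * k * inner d u" by (simp add: power2_eq_square mult.assoc)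
    then show ?thesis by simp
  qed
  finally have "(norm (rf u c x - rf u c y))^2 = (norm (x - y))^2"
    by (simp add: d_def power2_norm_eq_inner)
  then show ?thesis by (simp add: dist_norm)
qed

fun D :: "'a::metric_space option \<Rightarrow> 'a option \<Rightarrow> real" where
  "D (Some x) (Some y) = dist x y"
| "D None None = 0"
| "D (Some x) None = 1"
| "D None (Some y) = 1"

lemma inv_D:
  fixes a :: "'a::euclidean_space"
  assumes r: "r > 0"
  shows "\<exists>t. (\<forall>p. t p > 0) \<and> (\<forall>p q. D (sphere_inversion a r p) (sphere_inversion a r q) = t p * t q * D p q)"
proof -
  define t where "t p = (case p of None \<Rightarrow> r | Some x \<Rightarrow> if x = a then 1/r else r / dist x a)" for p
  have pos: "\<forall>p. t p > 0" using r by (auto simp: t_def split: option.splits)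
  have "D (sphere_inversion a r p) (sphere_inversion a r q) = t p * t q * D p q" for p q
  proof (cases p)
    case None
    then show ?thesis
    proof (cases q)
      case (Some y)
      then show ?thesis using None r
        by (cases "y = a") (auto simp: t_def sphere_inversion_def inv_dist_center_sq power2_eq_square)
    qed (simp add: sphere_inversion_def)
  next
    case (Some x)
    then show ?thesis
    proof (cases q)
      case None
      then show ?thesis using Some r
        by (cases "x = a") (auto simp: t_def sphere_inversion_def inv_dist_center_sq power2_eq_square)
    next
      case (Some y)
      then show ?thesis using \<open>p = Some x\<close> r
        by (cases "x = a"; cases "y = a")
           (auto simp: t_def sphere_inversion_def inv_dist_sq inv_dist_center_sq power2_eq_square dist_commute)
    qed
  qed
  then show ?thesis using pos by blast
qed

lemma refl_D:
  fixes u :: "'a::euclidean_space"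
  assumes "u \<noteq> 0"
  shows "D (hyperplane_reflection u c p) (hyperplane_reflection u c q) = D p q"
  using rf_dist[OF assms, of c] unfolding rf_def
  by (cases p; cases q) (auto simp: hyperplane_reflection_def)

lemma mobius_D:
  fixes T :: "'a::euclidean_space option \<Rightarrow> 'a option"
  assumes "mobius T"
  shows "\<exists>t. (\<forall>p. t p > 0) \<and> (\<forall>p q. D (T p) (T q) = t p * t q * D p q)"
  using assms
proof induction
  case (inv r a)
  then show ?case using inv_D by blast
next
  case (refl u c)
  then show ?case using refl_D[of u c] by (intro exI[of _ "\<lambda>_. 1"]) auto
next
  case (comp f g)
  then obtain tf tg where f: "\<forall>p. tf p > 0" "\<forall>p q. D (f p) (f q) = tf p * tf q * D p q"
    and g: "\<forall>p. tg p > 0" "\<forall>p q. D (g p) (g q) = tg p * tg q * D p q" by blast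
  show ?case
    by (rule exI[of _ "\<lambda>p. tf (g p) * tg p"]) (use f g in auto)
qed


lemma refl_Some: "hyperplane_reflection u c (Some x) = Some (rf u c x)"
  by (simp add: hyperplane_reflection_def rf_def)

lemma iso_ext:
  fixes p q :: "nat \<Rightarrow> 'a::euclidean_space"
  assumes "finite S" "\<forall>i\<in>S. \<forall>j\<in>S. dist (p i) (p j) = dist (q i) (q j)"
  shows "\<exists>T g. mobius T \<and> T None = None \<and> (\<forall>x. T (Some x) = Some (g x))
           \<and> (\<forall>x y. dist (g x) (g y) = dist x y) \<and> (\<forall>i\<in>S. g (p i) = q i)"
  using assms
proof (induction S rule: finite_induct)
  case empty
  obtain b :: 'a where b: "b \<in> Basis" using nonempty_Basis by blast
  then have b0: "b \<noteq> 0" by auto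
  show ?case
    by (rule exI[of _ "hyperplane_reflection b 0"], rule exI[of _ "rf b 0"])
       (use b0 rf_dist[OF b0] mobius.refl[OF b0, of 0] in \<open>auto simp: refl_Some\<close>,
        simp add: hyperplane_reflection_def)
next
  case (insert k S)
  then obtain T g where T: "mobius T" "T None = None" "\<forall>x. T (Some x) = Some (g x)"
     "\<forall>x y. dist (g x) (g y) = dist x y" "\<forall>i\<in>S. g (p i) = q i" by auto
  define P where "P = g (p k)"
  show ?case
  proof (cases "P = q k")
    case True
    then show ?thesis using T by (intro exI[of _ T] exI[of _ g]) (auto simp: P_def)
  next
    case False
    define u where "u = q k - P"
    define c where "c = (inner (q k) (q k) - inner P P) / 2"
    have u0: "u \<noteq> 0" using False by (simp add: u_def)
    have uu: "inner u u > 0" using u0 by simp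
    have c2: "2*c = inner (q k) (q k) - inner P P" by (simp add: c_def)
    have fixk: "rf u c P = q k"
    proof -
      have "2 * (inner P u - c) = - inner u u"
        using c2 by (simp add: u_def inner_diff_left inner_diff_right inner_commute algebra_simps)
      then have "2 * (inner P u - c) / inner u u = -1" using uu by simp
      then show ?thesis by (simp add: rf_def u_def)
    qed
    have fixi: "rf u c (q i) = q i" if i: "i \<in> S" for i
    proof -
      have "dist (q i) P = dist (q i) (q k)"
        using T(4,5) i insert.prems by (simp add: P_def) (metis T(4) insertCI)
      then have "(norm (q i - P))^2 = (norm (q i - q k))^2" by (simp add: dist_norm)
      then have "inner (q i) u = c"
        using c2 by (simp add: power2_norm_eq_inner u_def inner_diff_left inner_diff_right inner_commute algebra_simps)
      then show ?thesis by (simp add: rf_def)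
    qed
    have M: "mobius (hyperplane_reflection u c \<circ> T)" by (rule mobius.comp[OF mobius.refl[OF u0] T(1)])
    have N: "hyperplane_reflection u c None = None" by (simp add: hyperplane_reflection_def)
    show ?thesis
      apply (rule exI[of _ "hyperplane_reflection u c \<circ> T"], rule exI[of _ "rf u c \<circ> g"])
      apply (intro conjI allI ballI, rule M)
         apply (simp add: T(2) N)
        apply (simp add: T(3) refl_Some)
       apply (simp add: rf_dist[OF u0] T(4))
      subgoal for i
        apply (cases "i = k")
        using fixk apply (simp add: P_def)
        using fixi T(5) by simp
      done
  qed
qed

lemma inv_Some:
  fixes a x :: "'a::euclidean_space"
  assumes "x \<noteq> a"
  shows "sphere_inversion a r (Some x) = Some (a + (r^2 / (norm (x - a))^2) *\<^sub>R (x - a))"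
  using assms by (simp add: sphere_inversion_def)

lemma inv_invol:
  fixes a x :: "'a::euclidean_space"
  assumes "x \<noteq> a" "r > 0"
  shows "sphere_inversion a r (Some (a + (r^2 / (norm (x - a))^2) *\<^sub>R (x - a))) = Some x"
proof -
  define X where "X = x - a"
  have X: "X \<noteq> 0" using assms by (simp add: X_def)
  define k where "k = r^2 / (norm X)^2"
  have k: "k > 0" using X assms by (simp add: k_def)
  have ne: "a + k *\<^sub>R X \<noteq> a" using X k by simp
  have "r^2 / (norm (k *\<^sub>R X))^2 * k = 1"
    using X k assms by (simp add: k_def power_mult_distrib field_simps)
  then have "(r^2 / (norm (k *\<^sub>R X))^2) *\<^sub>R (k *\<^sub>R X) = X" by (simp only: scaleR_scaleR) simp
  then have F1: "sphere_inversion a r (Some (a + k *\<^sub>R X)) = Some (a + X)"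
    using ne by (simp add: sphere_inversion_def)
  have e1: "a + (r^2 / (norm (x - a))^2) *\<^sub>R (x - a) = a + k *\<^sub>R X" by (simp add: k_def X_def)
  have e2: "a + X = x" by (simp add: X_def)
  show ?thesis by (simp only: e1 F1 e2)
qed

theorem lemma3p1:
  fixes v v' :: "nat \<Rightarrow> 'a::euclidean_space"
  assumes "inj_on v {0..DIM('a)}" and "\<not> affine_dependent (v ` {0..DIM('a)})"
      and "inj_on v' {0..DIM('a)}" and "\<not> affine_dependent (v' ` {0..DIM('a)})"
  shows "(\<exists>u :: nat \<Rightarrow> real. \<forall>i\<in>{0..DIM('a)}. \<forall>j\<in>{0..DIM('a)}. i \<noteq> j \<longrightarrow>
            dist (v' i) (v' j) = exp ((u i + u j) / 2) * dist (v i) (v j))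
         \<longleftrightarrow>
         (\<exists>T. mobius T \<and> (\<forall>i\<in>{0..DIM('a)}. T (Some (v i)) = Some (v' i)))"
proof
  assume "\<exists>u :: nat \<Rightarrow> real. \<forall>i\<in>{0..DIM('a)}. \<forall>j\<in>{0..DIM('a)}. i \<noteq> j \<longrightarrow>
            dist (v' i) (v' j) = exp ((u i + u j) / 2) * dist (v i) (v j)"
  then obtain u :: "nat \<Rightarrow> real" where u: "\<And>i j. i\<in>{0..DIM('a)} \<Longrightarrow> j\<in>{0..DIM('a)} \<Longrightarrow> i \<noteq> j \<Longrightarrow>
            dist (v' i) (v' j) = exp ((u i + u j) / 2) * dist (v i) (v j)" by blast
  define n where "n = DIM('a)"
  have ne: "v i \<noteq> v 0" "v' i \<noteq> v' 0" if "i \<in> {1..n}" for i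
    using that inj_onD[OF assms(1), of i 0] inj_onD[OF assms(3), of i 0] unfolding n_def by auto
  define E where "E k = exp (u k / 2)" for k
  have Epos: "E k > 0" for k by (simp add: E_def)
  have Eexp: "exp ((u i + u j)/2) = E i * E j" for i j
    by (simp add: E_def exp_add[symmetric] add_divide_distrib)
  have uE: "dist (v' i) (v' j) = E i * E j * dist (v i) (v j)"
    if "i \<in> {0..n}" "j \<in> {0..n}" "i \<noteq> j" for i j
    using u[of i j] that Eexp[of i j] by (simp add: n_def)
  define w where "w i = v 0 + (1^2 / (norm (v i - v 0))^2) *\<^sub>R (v i - v 0)" for i
  define w' where "w' i = v' 0 + ((E 0)^2 / (norm (v' i - v' 0))^2) *\<^sub>R (v' i - v' 0)" for i
  have dw: "dist (w i) (w j) = dist (w' i) (w' j)" if ij: "i \<in> {1..n}" "j \<in> {1..n}" for i j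
  proof (cases "i = j")
    case False
    have 1: "dist (w i) (w j) = 1^2 * dist (v i) (v j) / (dist (v i) (v 0) * dist (v j) (v 0))"
      unfolding w_def by (rule inv_dist) (use ne ij in auto)
    have 2: "dist (w' i) (w' j) = (E 0)^2 * dist (v' i) (v' j) / (dist (v' i) (v' 0) * dist (v' j) (v' 0))"
      unfolding w'_def by (rule inv_dist) (use ne ij in auto)
    have a: "dist (v' i) (v' j) = E i * E j * dist (v i) (v j)" using uE[of i j] ij False by auto
    have b: "dist (v' i) (v' 0) = E i * E 0 * dist (v i) (v 0)" using uE[of i 0] ij by auto
    have c: "dist (v' j) (v' 0) = E j * E 0 * dist (v j) (v 0)" using uE[of j 0] ij by auto
    have p1: "dist (v i) (v 0) > 0" "dist (v j) (v 0) > 0" using ne ij by auto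
    show ?thesis unfolding 1 2 a b c using p1 Epos[of i] Epos[of j] Epos[of 0]
      by (simp add: field_simps power2_eq_square)
  qed simp
  obtain T g where T: "mobius T" "T None = None" "\<forall>x. T (Some x) = Some (g x)"
     "\<forall>i\<in>{1..n}. g (w i) = w' i"
    using iso_ext[of "{1..n}" w w'] dw by auto
  define M where "M = (sphere_inversion (v' 0) (E 0) \<circ> T) \<circ> sphere_inversion (v 0) 1"
  have "mobius M" unfolding M_def
    by (rule mobius.comp[OF mobius.comp[OF mobius.inv[OF Epos] T(1)] mobius.inv]) simp
  moreover have "M (Some (v i)) = Some (v' i)" if i: "i \<in> {0..DIM('a)}" for i
  proof (cases "i = 0")
    case True
    then show ?thesis by (simp add: M_def sphere_inversion_def T(2))
  next
    case False
    then have i1: "i \<in> {1..n}" using i by (auto simp: n_def)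
    have "sphere_inversion (v 0) 1 (Some (v i)) = Some (w i)"
      unfolding w_def by (rule inv_Some) (use ne i1 in auto)
    moreover have "sphere_inversion (v' 0) (E 0) (Some (w' i)) = Some (v' i)"
      unfolding w'_def by (rule inv_invol) (use ne i1 Epos in auto)
    ultimately show ?thesis using T(3,4) i1 by (simp add: M_def)
  qed
  ultimately show "\<exists>T. mobius T \<and> (\<forall>i\<in>{0..DIM('a)}. T (Some (v i)) = Some (v' i))" by blast
next
  assume "\<exists>T. mobius T \<and> (\<forall>i\<in>{0..DIM('a)}. T (Some (v i)) = Some (v' i))"
  then obtain T where T: "mobius T" "\<forall>i\<in>{0..DIM('a)}. T (Some (v i)) = Some (v' i)" by blast
  obtain t where t: "\<forall>p. t p > 0" "\<forall>p q. D (T p) (T q) = t p * t q * D p q"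
    using mobius_D[OF T(1)] by blast
  define u where "u k = 2 * ln (t (Some (v k)))" for k
  have "dist (v' i) (v' j) = exp ((u i + u j) / 2) * dist (v i) (v j)"
    if "i\<in>{0..DIM('a)}" "j\<in>{0..DIM('a)}" for i j
  proof -
    have "exp ((u i + u j) / 2) = t (Some (v i)) * t (Some (v j))"
    proof -
      have "(u i + u j) / 2 = ln (t (Some (v i))) + ln (t (Some (v j)))" by (simp add: u_def)
      then have "exp ((u i + u j) / 2) = exp (ln (t (Some (v i)))) * exp (ln (t (Some (v j))))"
        by (simp only: exp_add)
      then show ?thesis using t(1) by simp
    qed
    moreover have "D (T (Some (v i))) (T (Some (v j))) = t (Some (v i)) * t (Some (v j)) * dist (v i) (v j)"
      using t(2) by simp
    ultimately show ?thesis using T(2) that by simp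
  qed
  then show "\<exists>u :: nat \<Rightarrow> real. \<forall>i\<in>{0..DIM('a)}. \<forall>j\<in>{0..DIM('a)}. i \<noteq> j \<longrightarrow>
            dist (v' i) (v' j) = exp ((u i + u j) / 2) * dist (v i) (v j)" by blast
qed

end
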